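(* Let $(\mu_n)_{n\ge0}$ be complex numbers with $\mu_0=1$, let $M(z)=\sum_{n\ge0}\mu_nz^n$, let $(h_n)_{n\ge1}$ be its boolean cumulants and $(c_n)_{n\ge1}$ its free cumulants. Then for every $n\ge 2$, $$c_n=\sum_{r=1}^{n-1}\ \sum_{\substack{i_1+\dots+i_r=n\\ i_j\ge1}}\frac{(-1)^{r-1}}{n-1}\binom{n-1}{r}\,h_{i_1}h_{i_2}\cdots h_{i_r},$$ where the inner sum is over ordered tuples $(i_1,\dots,i_r)$ of positive integers summing to $n$. *)

theory Defs
  imports Complex_Main "HOL-Computational_Algebra.Formal_Power_Series"
begin

definition moment_fps :: "(nat \<Rightarrow> complex) \<Rightarrow> complex fps" where
  "moment_fps mu = Abs_fps mu"

text \<open>Boolean cumulants: H(z) = sum_{n>=1} h_n z^n with M(z) = 1/(1 - H(z)),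
  i.e. H = 1 - 1/M.\<close>
definition boolean_cumulant :: "(nat \<Rightarrow> complex) \<Rightarrow> nat \<Rightarrow> complex" where
  "boolean_cumulant mu n = fps_nth (1 - inverse (moment_fps mu)) n"

definition free_cumulant_fps :: "(nat \<Rightarrow> complex) \<Rightarrow> complex fps" where
  "free_cumulant_fps mu =
     (THE C. fps_compose C (fps_X * moment_fps mu) = moment_fps mu)"

definition free_cumulant :: "(nat \<Rightarrow> complex) \<Rightarrow> nat \<Rightarrow> complex" where
  "free_cumulant mu n = fps_nth (free_cumulant_fps mu) n"

end

theory Submission
  imports Defs
begin

lemma L1:
  fixes psi :: "complex fps"
  assumes "p \<ge> 1"
  shows "of_nat p * fps_nth (psi^(p-1) * fps_deriv psi) j = of_nat (j+1) * fps_nth (psi^p) (j+1)"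
proof -
  have "fps_nth (fps_deriv (psi^p)) j = of_nat (j+1) * fps_nth (psi^p) (j+1)" by simp
  moreover have "fps_deriv (psi^p) = fps_const (of_nat p) * (psi^(p-1) * fps_deriv psi)"
    by (simp add: fps_deriv_power mult_ac)
  ultimately show ?thesis by (simp add: fps_mult_left_const_nth)
qed

lemma inv0: "fps_nth (fps_inv (a::complex fps)) 0 = 0"
  by (simp add: fps_inv_def)

lemma G_props:
  assumes "mu 0 = 1"
  shows "fps_nth (fps_X * moment_fps mu) 0 = 0" "fps_nth (fps_X * moment_fps mu) 1 = 1"
  using assms by (simp_all add: moment_fps_def fps_X_mult_nth)

lemma free_fps:
  assumes "mu 0 = 1"
  shows "free_cumulant_fps mu oo (fps_X * moment_fps mu) = moment_fps mu"
proof -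
  let ?G = "fps_X * moment_fps mu" and ?M = "moment_fps mu"
  have g0: "fps_nth ?G 0 = 0" and g1: "fps_nth ?G 1 \<noteq> 0" using G_props(1)[of mu] G_props(2)[of mu] assms by auto
  have ex: "(?M oo fps_inv ?G) oo ?G = ?M"
    by (metis fps_compose_assoc fps_compose_fps_X fps_inv g0 g1 inv0)
  have un: "C = ?M oo fps_inv ?G" if "C oo ?G = ?M" for C
    by (metis fps_compose_assoc fps_compose_fps_X fps_inv_right g0 g1 inv0 that)
  have "free_cumulant_fps mu = ?M oo fps_inv ?G"
    unfolding free_cumulant_fps_def using ex un by (rule the_equality)
  with ex show ?thesis by simp
qed

lemma L2:
  fixes G psi F :: "complex fps"
  assumes Gpsi: "G * psi = fps_X" and GF: "G = fps_X * F" and kn: "k \<le> n" and n1: "n \<ge> 1"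
  shows "fps_nth (fps_deriv (G^k) * psi^n) (n-1) = (if k = n then of_nat n else 0)"
proof (cases "k = 0")
  case True then show ?thesis using n1 by simp
next
  case False
  define m where "m = n - k"
  have nkm: "n = k + m" using kn m_def by simp
  have key: "fps_deriv (G^k) * psi^k = fps_deriv (fps_X^k) - G^k * fps_deriv (psi^k)"
  proof -
    have "fps_deriv ((G*psi)^k) = fps_deriv (fps_X^k)" using Gpsi by simp
    then show ?thesis by (simp add: power_mult_distrib algebra_simps)
  qed
  have dX: "fps_deriv (fps_X^k :: complex fps) = fps_const (of_nat k) * fps_X^(k-1)"
    by (simp add: fps_deriv_power)
  have dpsi: "fps_deriv (psi^k) = fps_const (of_nat k) * (psi^(k-1) * fps_deriv psi)"
    by (simp add: fps_deriv_power mult_ac)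
  have e1: "fps_deriv (G^k) * psi^n = fps_const (of_nat k) * (fps_X^(k-1) * psi^m)
      - fps_const (of_nat k) * (G^k * psi^(k-1) * fps_deriv psi * psi^m)"
  proof -
    have "fps_deriv (G^k) * psi^n = (fps_deriv (G^k) * psi^k) * psi^m"
      by (simp add: nkm power_add mult_ac)
    also have "\<dots> = (fps_deriv (fps_X^k) - G^k * fps_deriv (psi^k)) * psi^m" by (simp add: key)
    finally show ?thesis by (simp add: dX dpsi algebra_simps)
  qed
  show ?thesis
  proof (cases "m = 0")
    case True
    then have kn': "k = n" using nkm by simp
    have "fps_nth (G^k * psi^(k-1) * fps_deriv psi * psi^m) (n-1)
        = fps_nth (fps_X^k * (F^k * psi^(k-1) * fps_deriv psi * psi^m)) (n-1)"
      by (simp add: GF power_mult_distrib mult_ac)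
    also have "\<dots> = 0" using kn' False by (simp add: fps_X_power_mult_nth)
    finally have z: "fps_nth (G^k * psi^(k-1) * fps_deriv psi * psi^m) (n-1) = 0" .
    have "fps_nth (fps_X^(k-1) * psi^m) (n-1) = 1" using True kn' by (simp add: fps_X_power_mult_nth)
    then show ?thesis using e1 z kn' by (simp add: fps_mult_left_const_nth)
  next
    case mpos: False
    have "G^k * psi^(k-1) * fps_deriv psi * psi^m = (G*psi)^k * (psi^(m-1) * fps_deriv psi)"
    proof -
      have "psi^(k-1) * psi^m = psi^k * psi^(m-1)"
        using False mpos by (metis add.commute add_diff_assoc2 le_add1 not_gr_zero
           Suc_leI power_add  Nat.add_diff_assoc  One_nat_def diff_add_inverse)
      then show ?thesis by (simp add: power_mult_distrib algebra_simps)
    qed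
    also have "\<dots> = fps_X^k * (psi^(m-1) * fps_deriv psi)" using Gpsi by simp
    finally have s2': "fps_nth (G^k * psi^(k-1) * fps_deriv psi * psi^m) (n-1)
        = fps_nth (fps_X^k * (psi^(m-1) * fps_deriv psi)) (n-1)" by (rule arg_cong)
    have s2: "fps_nth (G^k * psi^(k-1) * fps_deriv psi * psi^m) (n-1)
        = fps_nth (psi^(m-1) * fps_deriv psi) (m-1)"
      unfolding s2' using False mpos nkm by (simp add: fps_X_power_mult_nth)
    have s1: "fps_nth (fps_X^(k-1) * psi^m) (n-1) = fps_nth (psi^m) m"
      using False mpos nkm by (simp add: fps_X_power_mult_nth)
    have l1: "of_nat m * fps_nth (psi^(m-1) * fps_deriv psi) (m-1) = of_nat m * fps_nth (psi^m) m"
      using L1[of m psi "m-1"] mpos by simp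
    then have "fps_nth (psi^(m-1) * fps_deriv psi) (m-1) = fps_nth (psi^m) m"
      using mpos by simp
    then show ?thesis using e1 s1 s2 mpos nkm by (simp add: fps_mult_left_const_nth)
  qed
qed

lemma coeff_main:
  assumes mu0: "mu 0 = 1" and n2: "n \<ge> 2"
  shows "fps_nth (free_cumulant_fps mu) n
     = - fps_nth ((inverse (moment_fps mu))^(n-1)) n / of_nat (n-1)"
proof -
  define A where "A = free_cumulant_fps mu"
  define M where "M = moment_fps mu"
  define psi where "psi = inverse M"
  define G where "G = fps_X * M"
  have M0: "fps_nth M 0 = 1" using mu0 by (simp add: M_def moment_fps_def)
  have Mpsi: "M * psi = 1" unfolding psi_def using M0 by (simp add: inverse_mult_eq_1')
  have Gpsi: "G * psi = fps_X" unfolding G_def using Mpsi by (simp add: mult.assoc)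
  have AG: "A oo G = M" unfolding A_def G_def M_def using free_fps[of mu] mu0 by simp
  define P where "P = (\<Sum>k\<in>{0..n}. fps_const (fps_nth A k) * G^k)"
  have GK: "fps_nth (G^k) j = 0" if "j < k" for j k
    using that by (simp add: G_def power_mult_distrib fps_X_power_mult_nth)
  have MP: "fps_nth M j = fps_nth P j" if "j \<le> n" for j
  proof -
    have "fps_nth M j = (\<Sum>k\<in>{0..j}. fps_nth A k * fps_nth (G^k) j)"
      using AG fps_compose_nth[of A G j] by simp
    also have "\<dots> = (\<Sum>k\<in>{0..n}. fps_nth A k * fps_nth (G^k) j)"
      by (rule sum.mono_neutral_left) (use that GK in auto)
    also have "\<dots> = fps_nth P j" by (simp add: P_def fps_sum_nth)
    finally show ?thesis .
  qed
  have dMP: "fps_nth (fps_deriv M) i = fps_nth (fps_deriv P) i" if "i \<le> n - 1" for i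
    using that n2 MP[of "i+1"] by simp
  have d1: "fps_nth (fps_deriv M * psi^n) (n-1) = fps_nth (fps_deriv P * psi^n) (n-1)"
    unfolding fps_mult_nth
  proof (rule sum.cong[OF refl])
    fix i assume "i \<in> {0..n-1}"
    then have "fps_nth (fps_deriv M) i = fps_nth (fps_deriv P) i" using dMP by simp
    then show "fps_nth (fps_deriv M) i * fps_nth (psi ^ n) (n - 1 - i) =
        fps_nth (fps_deriv P) i * fps_nth (psi ^ n) (n - 1 - i)" by simp
  qed
  have "fps_deriv P * psi^n = (\<Sum>k\<in>{0..n}. fps_const (fps_nth A k) * (fps_deriv (G^k) * psi^n))"
    by (simp add: P_def fps_deriv_sum sum_distrib_right mult.assoc)
  then have "fps_nth (fps_deriv P * psi^n) (n-1)
      = (\<Sum>k\<in>{0..n}. fps_nth A k * fps_nth (fps_deriv (G^k) * psi^n) (n-1))"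
    by (simp add: fps_sum_nth)
  also have "\<dots> = (\<Sum>k\<in>{0..n}. fps_nth A k * (if k = n then of_nat n else 0))"
    by (rule sum.cong) (use L2[OF Gpsi G_def] n2 in auto)
  also have "\<dots> = fps_nth A n * of_nat n" proof -
    have "(\<Sum>k\<in>{0..n}. fps_nth A k * (if k = n then of_nat n else 0))
        = (\<Sum>k\<in>{0..n}. if k = n then fps_nth A n * of_nat n else 0)"
      by (rule sum.cong) auto
    then show ?thesis by simp
  qed
  finally have d2: "fps_nth (fps_deriv M * psi^n) (n-1) = fps_nth A n * of_nat n"
    using d1 by simp
  have "fps_deriv (M * psi) = 0" using Mpsi by simp
  then have dd: "fps_deriv M * psi = - (M * fps_deriv psi)" by (simp add: add_eq_0_iff)
  have "fps_deriv M * psi^n = (fps_deriv M * psi) * psi * psi^(n-2)"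
    using n2 by (metis (no_types, lifting) mult.assoc power_add power_one_right
       le_add_diff_inverse2 one_add_one power_Suc2 add_2_eq_Suc)
  also have "\<dots> = (- (M * fps_deriv psi)) * psi * psi^(n-2)" by (simp only: dd)
  also have "\<dots> = - ((M * psi) * (psi^(n-2) * fps_deriv psi))" by (simp add: mult_ac)
  finally have d3: "fps_deriv M * psi^n = - (psi^(n-2) * fps_deriv psi)" using Mpsi by simp
  have l1: "of_nat (n-1) * fps_nth (psi^(n-2) * fps_deriv psi) (n-1) = of_nat n * fps_nth (psi^(n-1)) n"
    using L1[of "n-1" psi "n-1"] n2 by (simp add: numeral_2_eq_2)
  have nz: "(of_nat (n-1) :: complex) \<noteq> 0" "(of_nat n :: complex) \<noteq> 0" using n2 by auto
  define X where "X = fps_nth (psi^(n-2) * fps_deriv psi) (n-1)"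
  define Y where "Y = fps_nth (psi^(n-1)) n"
  from d2 d3 have e: "fps_nth A n * of_nat n = - X" unfolding X_def by simp
  have "of_nat n * (fps_nth A n * of_nat (n-1)) = of_nat n * (- Y)"
  proof -
    have "of_nat n * (fps_nth A n * of_nat (n-1)) = of_nat (n-1) * (fps_nth A n * of_nat n)"
      by (simp add: mult_ac)
    also have "\<dots> = - (of_nat (n-1) * X)" by (simp add: e)
    also have "\<dots> = of_nat n * (- Y)" using l1 unfolding X_def Y_def by simp
    finally show ?thesis .
  qed
  then have "fps_nth A n * of_nat (n-1) = - Y" using nz(2) by (rule mult_left_cancel[THEN iffD1, rotated])
  then have "fps_nth A n = - Y / of_nat (n-1)" using nz(1) by (metis nonzero_mult_div_cancel_right)
  then show ?thesis unfolding A_def Y_def psi_def M_def .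
qed

lemma prod_list_nth': "prod_list (map f xs) = (\<Prod>i\<in>{0..<length xs}. f (xs!i))"
  by (induction xs) (simp_all add: prod.atLeast0_lessThan_Suc_shift del: prod.op_ivl_Suc)

lemma comp_lemma:
  fixes H :: "complex fps"
  assumes H0: "fps_nth H 0 = 0" and r1: "r \<ge> 1"
  shows "fps_nth (H^r) n = (\<Sum>is\<in>{is :: nat list. length is = r \<and> (\<forall>i\<in>set is. i \<ge> 1) \<and> sum_list is = n}.
           prod_list (map (fps_nth H) is))"
proof -
  obtain m where rm: "r = Suc m" using r1 by (cases r) auto
  have "fps_nth (H^r) n = (\<Sum>v\<in>natpermute n (m+1). \<Prod>j\<in>{0..m}. fps_nth H (v!j))"
    unfolding rm by (rule fps_power_nth_Suc)
  also have "\<dots> = (\<Sum>v\<in>natpermute n r. prod_list (map (fps_nth H) v))"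
  proof (rule sum.cong)
    fix v assume "v \<in> natpermute n r"
    then have "length v = Suc m" by (simp add: natpermute_def rm)
    moreover have "{0..m} = {0..<Suc m}" by auto
    ultimately show "(\<Prod>j\<in>{0..m}. fps_nth H (v!j)) = prod_list (map (fps_nth H) v)"
      by (simp add: prod_list_nth')
  qed (simp add: rm)
  also have "\<dots> = (\<Sum>is\<in>{is :: nat list. length is = r \<and> (\<forall>i\<in>set is. i \<ge> 1) \<and> sum_list is = n}.
           prod_list (map (fps_nth H) is))"
  proof (rule sum.mono_neutral_right)
    show "finite (natpermute n r)" by (rule natpermute_finite)
    show "{is. length is = r \<and> (\<forall>i\<in>set is. 1 \<le> i) \<and> sum_list is = n} \<subseteq> natpermute n r"
      by (auto simp: natpermute_def)
    show "\<forall>i\<in>natpermute n r - {is. length is = r \<and> (\<forall>i\<in>set is. 1 \<le> i) \<and> sum_list is = n}.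
        prod_list (map (fps_nth H) i) = 0"
    proof
      fix v assume "v \<in> natpermute n r - {is. length is = r \<and> (\<forall>i\<in>set is. 1 \<le> i) \<and> sum_list is = n}"
      then obtain i where "i \<in> set v" "i = 0" by (auto simp: natpermute_def not_le)
      then have "0 \<in> set (map (fps_nth H) v)" using H0 by force
      then show "prod_list (map (fps_nth H) v) = 0" by (simp add: prod_list_zero_iff)
    qed
  qed
  finally show ?thesis .
qed

theorem mainTheorem2:
  fixes mu :: "nat \<Rightarrow> complex" and n :: nat
  assumes "mu 0 = 1" and "n \<ge> 2"
  shows "free_cumulant mu n =
    (\<Sum>r\<in>{1..n-1}. \<Sum>is\<in>{is :: nat list. length is = r \<and> (\<forall>i\<in>set is. i \<ge> 1) \<and> sum_list is = n}.
       ((-1) ^ (r - 1) / of_nat (n - 1) * of_nat ((n - 1) choose r)) *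
       prod_list (map (boolean_cumulant mu) is))"
proof -
  define psi where "psi = inverse (moment_fps mu)"
  define H where "H = 1 - psi"
  have bc: "boolean_cumulant mu = fps_nth H"
    by (simp add: fun_eq_iff boolean_cumulant_def H_def psi_def)
  have H0: "fps_nth H 0 = 0" using assms(1) by (simp add: H_def psi_def moment_fps_def)
  have "psi^(n-1) = (-H + 1)^(n-1)" by (simp add: H_def)
  also have "\<dots> = (\<Sum>r\<le>n-1. of_nat ((n-1) choose r) * (-H)^r * 1^(n-1-r))"
    by (rule binomial_ring)
  also have "\<dots> = (\<Sum>r\<le>n-1. fps_const (of_nat ((n-1) choose r) * (-1)^r) * H^r)"
  proof (rule sum.cong[OF refl])
    fix r
    have m1: "(-1 :: complex fps)^r = fps_const ((-1)^r)"
      by (metis fps_const_1_eq_1 fps_const_neg fps_const_power)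
    have a1: "(-H)^r = fps_const ((-1)^r) * H^r"
      by (subst power_minus) (simp only: m1)
    have a2: "fps_const (of_nat ((n-1) choose r) * (-1)^r) = of_nat ((n-1) choose r) * fps_const ((-1)^r)"
      by (simp only: fps_const_mult[symmetric] fps_of_nat)
    show "of_nat ((n-1) choose r) * (-H)^r * 1^(n-1-r)
        = fps_const (of_nat ((n-1) choose r) * (-1)^r) * H^r"
      by (simp only: a1 a2 power_one mult_1_right mult.assoc)
  qed
  finally have Y: "fps_nth (psi^(n-1)) n = (\<Sum>r\<le>n-1. of_nat ((n-1) choose r) * (-1)^r * fps_nth (H^r) n)"
    by (simp add: fps_sum_nth)
  have set: "{..n-1} = insert 0 {1..n-1}" by auto
  have "free_cumulant mu n = - fps_nth (psi^(n-1)) n / of_nat (n-1)"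
    unfolding free_cumulant_def psi_def using coeff_main[of mu n] assms by simp
  also have "\<dots> = (\<Sum>r\<in>{1..n-1}. ((-1) ^ (r - 1) / of_nat (n - 1) * of_nat ((n - 1) choose r)) * fps_nth (H^r) n)"
  proof -
    have z: "fps_nth (H^0) n = 0" using assms(2) by simp
    have "fps_nth (psi^(n-1)) n = (\<Sum>r\<in>{1..n-1}. of_nat ((n-1) choose r) * (-1)^r * fps_nth (H^r) n)"
      unfolding Y set by (subst sum.insert) (use assms(2) in \<open>auto simp: z\<close>)
    then have "- fps_nth (psi^(n-1)) n / of_nat (n-1)
       = (\<Sum>r\<in>{1..n-1}. - (of_nat ((n-1) choose r) * (-1)^r * fps_nth (H^r) n) / of_nat (n-1))"
      by (simp add: sum_divide_distrib sum_negf)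
    also have "\<dots> = (\<Sum>r\<in>{1..n-1}. ((-1) ^ (r - 1) / of_nat (n - 1) * of_nat ((n - 1) choose r)) * fps_nth (H^r) n)"
    proof (rule sum.cong[OF refl])
      fix r :: nat assume "r \<in> {1..n-1}"
      then have "(-1::complex)^r = - ((-1)^(r-1))"
        by (metis One_nat_def Suc_pred atLeastAtMost_iff less_eq_Suc_le mult_minus1 power_Suc)
      then show "- (of_nat ((n-1) choose r) * (-1)^r * fps_nth (H^r) n) / of_nat (n-1)
          = ((-1) ^ (r - 1) / of_nat (n - 1) * of_nat ((n - 1) choose r)) * fps_nth (H^r) n"
        by simp
    qed
    finally show ?thesis .
  qed
  also have "\<dots> = (\<Sum>r\<in>{1..n-1}. \<Sum>is\<in>{is :: nat list. length is = r \<and> (\<forall>i\<in>set is. i \<ge> 1) \<and> sum_list is = n}.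
       ((-1) ^ (r - 1) / of_nat (n - 1) * of_nat ((n - 1) choose r)) *
       prod_list (map (boolean_cumulant mu) is))"
    unfolding bc by (intro sum.cong refl) (simp add: comp_lemma[OF H0] sum_distrib_left)
  finally show ?thesis .
qed

end
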